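(* Let $G=(V,E)$ be a finite, connected, undirected, edge-transitive graph, let $\lambda>0$ be the walking rate and $\gamma>0$ the recovery rate, and consider the two-agent SIS epidemic described in the context, started with both agents infected and located at the same vertex. Let $T$ be the end of epidemic time and $M$ the meeting time from distance one. Write $\mathcal L_T(s)=\mathbb E(e^{-sT})$ and $\mathcal L_M(s)=\mathbb E(e^{-sM})$. Then for every $s>0$, \[ \mathcal L_T(s)=\frac{2\gamma\left(\dfrac{1-\mathcal L_M(s+\gamma)}{s+\gamma}-\dfrac{1-\mathcal L_M(s+2\gamma)}{s+2\gamma}\right)}{\dfrac{2\lambda+s}{2\lambda}-2\mathcal L_M(s+\gamma)+\mathcal L_M(s+2\gamma)}. \]
   Context: Model. $G=(V,E)$ is a finite, connected, undirected graph which is edge-transitive: for any two edges $e_1,e_2\in E$ there is a graph automorphism mapping $e_1$ to $e_2$. Two agents move on $V$ according to independent continuous-time simple random walks $W_1(t),W_2(t)$: each agent stays at its current vertex for an $\mathrm{Exp}(\lambda)$ holding time (independently of everything else), then jumps to a neighbour chosen uniformly at random (so from $i$ it jumps to $j$ at rate $\lambda/d(i)$ if $\{i,j\}\in E$, where $d(i)$ is the degree of $i$). Each agent has a state in $\{S,I\}$ (susceptible/infected). Whenever the two agents occupy the same vertex and at least one of them is infected, the other becomes (or stays) infected immediately. Each infected agent, independently of everything else, returns to state $S$ after an $\mathrm{Exp}(\gamma)$ recovery time (recovery times are memoryless). Initially both agents are infected and at the same vertex. End of epidemic time: $T=\inf\{t\ge0: S_1(t)=S_2(t)=S\}$, where $S_k(t)$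 is the state of agent $k$. Meeting time from distance one: for an edge $\{i,j\}\in E$, $M=\inf\{t\ge 0: W_1(t)=W_2(t)\}$ for the two independent walks started at $W_1(0)=i$, $W_2(0)=j$; by edge-transitivity its distribution does not depend on the chosen edge. *)

theory Defs
  imports "HOL-Probability.Probability"
begin

definition simple_graph :: "'v set \<Rightarrow> 'v set set \<Rightarrow> bool" where
  "simple_graph V E \<longleftrightarrow> finite V \<and>
     (\<forall>e\<in>E. \<exists>a b. a \<in> V \<and> b \<in> V \<and> a \<noteq> b \<and> e = {a, b})"

definition graph_connected :: "'v set \<Rightarrow> 'v set set \<Rightarrow> bool" where
  "graph_connected V E \<longleftrightarrow>
     (\<forall>u\<in>V. \<forall>v\<in>V. (u, v) \<in> {(a, b). {a, b} \<in> E}\<^sup>*)"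

definition graph_automorphism :: "'v set \<Rightarrow> 'v set set \<Rightarrow> ('v \<Rightarrow> 'v) \<Rightarrow> bool" where
  "graph_automorphism V E f \<longleftrightarrow> bij_betw f V V \<and>
     (\<forall>a\<in>V. \<forall>b\<in>V. {a, b} \<in> E \<longleftrightarrow> {f a, f b} \<in> E)"

definition edge_transitive :: "'v set \<Rightarrow> 'v set set \<Rightarrow> bool" where
  "edge_transitive V E \<longleftrightarrow>
     (\<forall>e1\<in>E. \<forall>e2\<in>E. \<exists>f. graph_automorphism V E f \<and> f ` e1 = e2)"

definition deg :: "'v set set \<Rightarrow> 'v \<Rightarrow> nat" where
  "deg E i = card {j. {i, j} \<in> E}"

text \<open>A CTMC with off-diagonal rates q x y on a finite state set S is constructed from
  its jump chain: in state x it waits an Exp(total rate) holding time and then jumps to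
  y \<noteq> x with probability q x y / total rate.  The randomness at step n is an independent
  family (indexed by the possible current state) of (holding time, next state) samples.\<close>

definition total_rate :: "('s \<Rightarrow> 's \<Rightarrow> real) \<Rightarrow> 's set \<Rightarrow> 's \<Rightarrow> real" where
  "total_rate q S x = (\<Sum>y\<in>S - {x}. q x y)"

definition jump_pmf :: "('s \<Rightarrow> 's \<Rightarrow> real) \<Rightarrow> 's set \<Rightarrow> 's \<Rightarrow> 's pmf" where
  "jump_pmf q S x =
     embed_pmf (\<lambda>y. if y \<in> S \<and> y \<noteq> x then q x y / total_rate q S x else 0)"

definition ctmc_step :: "('s \<Rightarrow> 's \<Rightarrow> real) \<Rightarrow> 's set \<Rightarrow> ('s \<Rightarrow> real \<times> 's) measure" where
  "ctmc_step q S = PiM S (\<lambda>x.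
      density lborel (exponential_density (total_rate q S x))
        \<Otimes>\<^sub>M measure_pmf (jump_pmf q S x))"

definition ctmc_source :: "('s \<Rightarrow> 's \<Rightarrow> real) \<Rightarrow> 's set \<Rightarrow> (nat \<Rightarrow> 's \<Rightarrow> real \<times> 's) measure" where
  "ctmc_source q S = PiM UNIV (\<lambda>_::nat. ctmc_step q S)"

primrec ctmc_state :: "'s \<Rightarrow> (nat \<Rightarrow> 's \<Rightarrow> real \<times> 's) \<Rightarrow> nat \<Rightarrow> 's" where
  "ctmc_state x0 \<omega> 0 = x0"
| "ctmc_state x0 \<omega> (Suc n) = snd (\<omega> n (ctmc_state x0 \<omega> n))"

definition ctmc_hold :: "'s \<Rightarrow> (nat \<Rightarrow> 's \<Rightarrow> real \<times> 's) \<Rightarrow> nat \<Rightarrow> real" where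
  "ctmc_hold x0 \<omega> n = fst (\<omega> n (ctmc_state x0 \<omega> n))"

text \<open>Jump times: J n = sum of the first n holding times; the process equals
  ctmc_state x0 \<omega> n on [J n, J (n+1)).\<close>
definition ctmc_jump_time :: "'s \<Rightarrow> (nat \<Rightarrow> 's \<Rightarrow> real \<times> 's) \<Rightarrow> nat \<Rightarrow> real" where
  "ctmc_jump_time x0 \<omega> n = (\<Sum>k<n. ctmc_hold x0 \<omega> k)"

text \<open>exp(-s * tau_A), where tau_A is the hitting time of A (value 0 when tau_A = infinity).\<close>
definition hit_exp :: "'s \<Rightarrow> 's set \<Rightarrow> real \<Rightarrow> (nat \<Rightarrow> 's \<Rightarrow> real \<times> 's) \<Rightarrow> real" where
  "hit_exp x0 A s \<omega> =
     (if \<exists>n. ctmc_state x0 \<omega> n \<in> A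
      then exp (- s * ctmc_jump_time x0 \<omega> (LEAST n. ctmc_state x0 \<omega> n \<in> A))
      else 0)"

definition hit_laplace :: "('s \<Rightarrow> 's \<Rightarrow> real) \<Rightarrow> 's set \<Rightarrow> 's \<Rightarrow> 's set \<Rightarrow> real \<Rightarrow> real" where
  "hit_laplace q S x0 A s = integral\<^sup>L (ctmc_source q S) (hit_exp x0 A s)"

definition walk2_rate :: "'v set \<Rightarrow> 'v set set \<Rightarrow> real \<Rightarrow> ('v \<times> 'v) \<Rightarrow> ('v \<times> 'v) \<Rightarrow> real" where
  "walk2_rate V E lam = (\<lambda>(x1, x2) (y1, y2).
      (if y2 = x2 \<and> {x1, y1} \<in> E then lam / real (deg E x1) else 0)
    + (if y1 = x1 \<and> {x2, y2} \<in> E then lam / real (deg E x2) else 0))"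

definition meet_laplace :: "'v set \<Rightarrow> 'v set set \<Rightarrow> real \<Rightarrow> 'v \<Rightarrow> 'v \<Rightarrow> real \<Rightarrow> real" where
  "meet_laplace V E lam i j s =
     hit_laplace (walk2_rate V E lam) (V \<times> V) (i, j) {(x, y). x \<in> V \<and> x = y} s"

text \<open>State (x1, x2, b1, b2): positions of the agents and infection flags (True = I).
  Instantaneous infection on co-location is applied after every event.\<close>

definition sis_normalize :: "'v \<times> 'v \<times> bool \<times> bool \<Rightarrow> 'v \<times> 'v \<times> bool \<times> bool" where
  "sis_normalize = (\<lambda>(x1, x2, b1, b2).
     if x1 = x2 \<and> (b1 \<or> b2) then (x1, x2, True, True) else (x1, x2, b1, b2))"

definition sis_rate :: "'v set \<Rightarrow> 'v set set \<Rightarrow> real \<Rightarrow> real \<Rightarrow>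
    ('v \<times> 'v \<times> bool \<times> bool) \<Rightarrow> ('v \<times> 'v \<times> bool \<times> bool) \<Rightarrow> real" where
  "sis_rate V E lam gam = (\<lambda>(x1, x2, b1, b2) \<sigma>'.
      (\<Sum>y\<in>{y\<in>V. {x1, y} \<in> E \<and> sis_normalize (y, x2, b1, b2) = \<sigma>'}. lam / real (deg E x1))
    + (\<Sum>y\<in>{y\<in>V. {x2, y} \<in> E \<and> sis_normalize (x1, y, b1, b2) = \<sigma>'}. lam / real (deg E x2))
    + (if b1 \<and> sis_normalize (x1, x2, False, b2) = \<sigma>' then gam else 0)
    + (if b2 \<and> sis_normalize (x1, x2, b1, False) = \<sigma>' then gam else 0))"

definition sis_states :: "'v set \<Rightarrow> ('v \<times> 'v \<times> bool \<times> bool) set" where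
  "sis_states V = V \<times> V \<times> UNIV \<times> UNIV"

definition sis_end_laplace :: "'v set \<Rightarrow> 'v set set \<Rightarrow> real \<Rightarrow> real \<Rightarrow> 'v \<Rightarrow> real \<Rightarrow> real" where
  "sis_end_laplace V E lam gam v0 s =
     hit_laplace (sis_rate V E lam gam) (sis_states V) (v0, v0, True, True)
       {\<sigma> \<in> sis_states V. \<not> fst (snd (snd \<sigma>)) \<and> \<not> snd (snd (snd \<sigma>))} s"

end

theory Submission
  imports Defs
begin

lemma measurable_compose_finite_default:
  assumes S: "finite S" and g: "g \<in> measurable M (count_space UNIV)"
    and F: "\<And>i. i \<in> S \<Longrightarrow> (\<lambda>x. F i x) \<in> measurable M N"
    and c: "\<And>x. x \<in> space M \<Longrightarrow> g x \<notin> S \<Longrightarrow> F (g x) x = c" and cN: "c \<in> space N"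
  shows "(\<lambda>x. F (g x) x) \<in> measurable M N"
proof -
  define g' where "g' x = (if g x \<in> S then Some (g x) else None)" for x
  define F' where "F' i x = (case i of Some j \<Rightarrow> F j x | None \<Rightarrow> c)" for i x
  have "(\<lambda>x. F' (g' x) x) \<in> measurable M N"
  proof (rule measurable_compose_countable'[where I="insert None (Some ` S)"])
    fix i assume "i \<in> insert None (Some ` S)"
    then show "(\<lambda>x. F' i x) \<in> measurable M N"
      using F cN by (auto simp: F'_def)
  next
    have "g' \<in> measurable M (count_space UNIV)"
      unfolding g'_def using measurable_compose[OF g measurable_count_space[of "\<lambda>y. if y \<in> S then Some y else None"]] by simp
    then show "g' \<in> measurable M (count_space (insert None (Some ` S)))"
      by (rule measurable_count_space_extend[rotated 2]) (auto simp: g'_def)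
  next
    show "countable (insert None (Some ` S))" using S by (auto intro: countable_finite)
  qed
  moreover have "\<And>x. x \<in> space M \<Longrightarrow> F' (g' x) x = F (g x) x"
    using c by (auto simp: F'_def g'_def)
  ultimately show ?thesis by (simp cong: measurable_cong)
qed

lemma state_shift:
  "ctmc_state x0 (case_nat x \<omega>) (Suc n) = ctmc_state (snd (x x0)) \<omega> n"
  by (induction n) auto

lemma hold_shift0: "ctmc_hold x0 (case_nat x \<omega>) 0 = fst (x x0)"
  by (simp add: ctmc_hold_def)

lemma hold_shift: "ctmc_hold x0 (case_nat x \<omega>) (Suc n) = ctmc_hold (snd (x x0)) \<omega> n"
  by (simp add: ctmc_hold_def state_shift del: ctmc_state.simps)

lemma jump_time_shift:
  "ctmc_jump_time x0 (case_nat x \<omega>) (Suc n) = fst (x x0) + ctmc_jump_time (snd (x x0)) \<omega> n"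
  unfolding ctmc_jump_time_def
  by (subst sum.lessThan_Suc_shift) (simp add: hold_shift0 hold_shift)

lemma hit_exp_in: "x0 \<in> A \<Longrightarrow> hit_exp x0 A s \<omega> = 1"
  by (auto simp: hit_exp_def ctmc_jump_time_def intro!: exI[of _ 0])

lemma hit_exp_shift:
  assumes "x0 \<notin> A"
  shows "hit_exp x0 A s (case_nat x \<omega>) = exp (- s * fst (x x0)) * hit_exp (snd (x x0)) A s \<omega>"
proof -
  let ?y = "snd (x x0)"
  have ex: "(\<exists>n. ctmc_state x0 (case_nat x \<omega>) n \<in> A) \<longleftrightarrow> (\<exists>n. ctmc_state ?y \<omega> n \<in> A)"
  proof
    assume "\<exists>n. ctmc_state x0 (case_nat x \<omega>) n \<in> A"
    then obtain n where n: "ctmc_state x0 (case_nat x \<omega>) n \<in> A" by blast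
    with assms obtain m where "n = Suc m" by (cases n) auto
    with n show "\<exists>n. ctmc_state ?y \<omega> n \<in> A" by (auto simp: state_shift simp del: ctmc_state.simps)
  next
    assume "\<exists>n. ctmc_state ?y \<omega> n \<in> A"
    then obtain n where "ctmc_state ?y \<omega> n \<in> A" by blast
    then show "\<exists>n. ctmc_state x0 (case_nat x \<omega>) n \<in> A"
      by (intro exI[of _ "Suc n"]) (simp add: state_shift del: ctmc_state.simps)
  qed
  show ?thesis
  proof (cases "\<exists>n. ctmc_state ?y \<omega> n \<in> A")
    case True
    then obtain n where n: "ctmc_state ?y \<omega> n \<in> A" by blast
    have "(LEAST n. ctmc_state x0 (case_nat x \<omega>) n \<in> A) = Suc (LEAST m. ctmc_state x0 (case_nat x \<omega>) (Suc m) \<in> A)"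
      by (rule Least_Suc[of _ "Suc n"]) (use n assms in \<open>simp_all add: state_shift del: ctmc_state.simps(2)\<close>)
    then have "(LEAST n. ctmc_state x0 (case_nat x \<omega>) n \<in> A) = Suc (LEAST m. ctmc_state ?y \<omega> m \<in> A)"
      by (simp add: state_shift del: ctmc_state.simps)
    then show ?thesis
      using True ex by (simp add: hit_exp_def jump_time_shift algebra_simps exp_add[symmetric])
  next
    case False
    then show ?thesis using ex by (simp add: hit_exp_def)
  qed
qed

lemma laplace_exponential:
  fixes l s :: real
  assumes l: "0 < l" and s: "0 \<le> s"
  shows "(\<integral>\<^sup>+ t. ennreal (exp (- s * t)) \<partial>density lborel (exponential_density l)) = ennreal (l / (l + s))"
proof -
  have "(\<integral>\<^sup>+ t. ennreal (exp (- s * t)) \<partial>density lborel (exponential_density l))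
      = (\<integral>\<^sup>+ t. ennreal (exponential_density l t) * ennreal (exp (- s * t)) \<partial>lborel)"
    by (rule nn_integral_density) auto
  also have "\<dots> = (\<integral>\<^sup>+ t. ennreal (l / (l + s)) * ennreal (exponential_density (l + s) t) \<partial>lborel)"
  proof (intro nn_integral_cong)
    fix t :: real
    show "ennreal (exponential_density l t) * ennreal (exp (- s * t)) =
          ennreal (l / (l + s)) * ennreal (exponential_density (l + s) t)"
    proof (cases "t < 0")
      case True then show ?thesis by (simp add: exponential_density_def)
    next
      case False
      have "exponential_density l t * exp (- s * t) = l / (l + s) * exponential_density (l + s) t"
      proof -
        have e: "exp (- t * l) * exp (- s * t) = exp (- t * (l + s))"
          by (simp add: exp_add[symmetric] algebra_simps)
        have "exponential_density l t * exp (- s * t) = l * exp (- t * (l + s))"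
          using False by (simp add: exponential_density_def) (simp add: exp_add[symmetric] algebra_simps)
        also have "\<dots> = l / (l + s) * ((l + s) * exp (- t * (l + s)))"
          using l s by simp
        also have "\<dots> = l / (l + s) * exponential_density (l + s) t"
          using False by (simp add: exponential_density_def)
        finally show ?thesis .
      qed
      then show ?thesis
        using l s False by (simp add: ennreal_mult[symmetric] exponential_density_def)
    qed
  qed
  also have "\<dots> = ennreal (l / (l + s)) * (\<integral>\<^sup>+ t. ennreal (exponential_density (l + s) t) \<partial>lborel)"
    by (rule nn_integral_cmult) simp
  also have "(\<integral>\<^sup>+ t. ennreal (exponential_density (l + s) t) \<partial>lborel) = 1"
  proof -
    interpret prob_space "density lborel (exponential_density (l + s))"
      using l s by (intro prob_space_exponential_density) simp
    have "emeasure (density lborel (exponential_density (l + s))) UNIV = 1"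
      using emeasure_space_1 by simp
    then show ?thesis by (simp add: emeasure_density)
  qed
  finally show ?thesis by simp
qed

lemma measurable_pmf_any: "f \<in> measurable (measure_pmf p) N \<longleftrightarrow> f \<in> UNIV \<rightarrow> space N"
  by (simp add: measurable_cong_sets[OF sets_measure_pmf_count_space refl])

locale ctmc =
  fixes q :: "'s \<Rightarrow> 's \<Rightarrow> real" and S :: "'s set"
  assumes fin: "finite S" and Qpos: "\<And>x. x \<in> S \<Longrightarrow> 0 < total_rate q S x"
    and qnn: "\<And>x y. x \<in> S \<Longrightarrow> y \<in> S \<Longrightarrow> 0 \<le> q x y"
begin

abbreviation "Q \<equiv> total_rate q S"

lemma pmf_jump:
  assumes x: "x \<in> S"
  shows "pmf (jump_pmf q S x) y = (if y \<in> S \<and> y \<noteq> x then q x y / Q x else 0)"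
  unfolding jump_pmf_def
proof (rule pmf_embed_pmf)
  show "\<And>y. 0 \<le> (if y \<in> S \<and> y \<noteq> x then q x y / Q x else 0)"
    using qnn[OF x] Qpos[OF x] by auto
  have "(\<integral>\<^sup>+ y. ennreal (if y \<in> S \<and> y \<noteq> x then q x y / Q x else 0) \<partial>count_space UNIV)
      = (\<integral>\<^sup>+ y. ennreal (q x y / Q x) * indicator (S - {x}) y \<partial>count_space UNIV)"
    by (intro nn_integral_cong) (auto simp: indicator_def)
  also have "\<dots> = (\<integral>\<^sup>+ y. ennreal (q x y / Q x) \<partial>count_space (S - {x}))"
    by (rule nn_integral_count_space_indicator[symmetric]) simp
  also have "\<dots> = (\<Sum>y\<in>S - {x}. ennreal (q x y / Q x))"
    using fin by (simp add: nn_integral_count_space_finite)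
  also have "\<dots> = ennreal (\<Sum>y\<in>S - {x}. q x y / Q x)"
    using qnn[OF x] Qpos[OF x] by (intro sum_ennreal) auto
  also have "(\<Sum>y\<in>S - {x}. q x y / Q x) = 1"
    using Qpos[OF x] by (simp add: sum_divide_distrib[symmetric] total_rate_def)
  finally show "(\<integral>\<^sup>+ y. ennreal (if y \<in> S \<and> y \<noteq> x then q x y / Q x else 0) \<partial>count_space UNIV) = 1"
    by simp
qed

lemma set_pmf_jump: "x \<in> S \<Longrightarrow> set_pmf (jump_pmf q S x) \<subseteq> S - {x}"
  by (auto simp: set_pmf_eq pmf_jump split: if_splits)

lemma prob_D: "x \<in> S \<Longrightarrow> prob_space (density lborel (exponential_density (Q x)))"
  using Qpos by (intro prob_space_exponential_density) auto

lemma prob_DJ: "x \<in> S \<Longrightarrow> prob_space (density lborel (exponential_density (Q x)) \<Otimes>\<^sub>M measure_pmf (jump_pmf q S x))"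
  by (intro prob_space_pair prob_D prob_space_measure_pmf)

lemma prob_step: "prob_space (ctmc_step q S)"
  unfolding ctmc_step_def
  by (intro prob_space_PiM prob_DJ)

lemma prob_source: "prob_space (ctmc_source q S)"
  unfolding ctmc_source_def
  by (intro prob_space_PiM prob_step)

lemma space_source_undef: "\<omega> \<in> space (ctmc_source q S) \<Longrightarrow> y \<notin> S \<Longrightarrow> \<omega> n y = undefined"
  unfolding ctmc_source_def ctmc_step_def
  by (auto simp: space_PiM PiE_def extensional_def)

lemma comp_meas:
  assumes "y \<in> S"
  shows "(\<lambda>\<omega>. \<omega> n y) \<in> measurable (ctmc_source q S)
     (density lborel (exponential_density (Q y)) \<Otimes>\<^sub>M measure_pmf (jump_pmf q S y))"
proof -
  have "(\<lambda>\<omega>. \<omega> n) \<in> measurable (ctmc_source q S) (ctmc_step q S)"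
    unfolding ctmc_source_def by (rule measurable_component_singleton) simp
  moreover have "(\<lambda>f. f y) \<in> measurable (ctmc_step q S)
     (density lborel (exponential_density (Q y)) \<Otimes>\<^sub>M measure_pmf (jump_pmf q S y))"
    unfolding ctmc_step_def using assms by (rule measurable_component_singleton)
  ultimately show ?thesis by (rule measurable_compose)
qed

lemma snd_comp_meas:
  assumes "y \<in> S"
  shows "(\<lambda>\<omega>. snd (\<omega> n y)) \<in> measurable (ctmc_source q S) (count_space UNIV)"
proof -
  have "(\<lambda>\<omega>. snd (\<omega> n y)) \<in> measurable (ctmc_source q S) (measure_pmf (jump_pmf q S y))"
    by (rule measurable_compose[OF comp_meas[OF assms] measurable_snd])
  then show ?thesis
    by (simp add: measurable_cong_sets[OF refl sets_measure_pmf_count_space])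
qed

lemma fst_comp_meas:
  assumes "y \<in> S"
  shows "(\<lambda>\<omega>. fst (\<omega> n y)) \<in> borel_measurable (ctmc_source q S)"
proof -
  have "(\<lambda>\<omega>. fst (\<omega> n y)) \<in> measurable (ctmc_source q S) (density lborel (exponential_density (Q y)))"
    by (rule measurable_compose[OF comp_meas[OF assms] measurable_fst])
  then show ?thesis by simp
qed

lemma state_meas[measurable]:
  "(\<lambda>\<omega>. ctmc_state x0 \<omega> n) \<in> measurable (ctmc_source q S) (count_space UNIV)"
proof (induction n)
  case 0
  then show ?case by simp
next
  case (Suc n)
  have "(\<lambda>\<omega>. (\<lambda>i \<omega>. snd (\<omega> n i)) (ctmc_state x0 \<omega> n) \<omega>) \<in> measurable (ctmc_source q S) (count_space UNIV)"
    by (rule measurable_compose_finite_default[OF fin Suc snd_comp_meas, where c="snd undefined"])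
       (auto simp: space_source_undef)
  then show ?case by simp
qed

lemma hold_meas[measurable]:
  "(\<lambda>\<omega>. ctmc_hold x0 \<omega> n) \<in> borel_measurable (ctmc_source q S)"
proof -
  have "(\<lambda>\<omega>. (\<lambda>i \<omega>. fst (\<omega> n i)) (ctmc_state x0 \<omega> n) \<omega>) \<in> borel_measurable (ctmc_source q S)"
    by (rule measurable_compose_finite_default[OF fin state_meas fst_comp_meas, where c="fst undefined"])
       (auto simp: space_source_undef)
  then show ?thesis by (simp add: ctmc_hold_def)
qed

lemma jump_time_meas[measurable]:
  "(\<lambda>\<omega>. ctmc_jump_time x0 \<omega> n) \<in> borel_measurable (ctmc_source q S)"
  unfolding ctmc_jump_time_def by measurable

lemma state_pred[measurable]:
  "Measurable.pred (ctmc_source q S) (\<lambda>\<omega>. ctmc_state x0 \<omega> n \<in> A)"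
proof -
  have "{\<omega> \<in> space (ctmc_source q S). ctmc_state x0 \<omega> n \<in> A} = (\<lambda>\<omega>. ctmc_state x0 \<omega> n) -` A \<inter> space (ctmc_source q S)"
    by auto
  also have "\<dots> \<in> sets (ctmc_source q S)"
    by (rule measurable_sets[OF state_meas]) simp
  finally show ?thesis by (simp add: Measurable.pred_def)
qed

lemma hit_exp_meas[measurable]:
  "hit_exp x0 A s \<in> borel_measurable (ctmc_source q S)"
proof -
  have l: "(\<lambda>\<omega>. LEAST n. ctmc_state x0 \<omega> n \<in> A) \<in> measurable (ctmc_source q S) (count_space UNIV)"
    by (rule measurable_Least) (rule state_pred)
  have e: "(\<lambda>\<omega>. exp (- s * ctmc_jump_time x0 \<omega> (LEAST n. ctmc_state x0 \<omega> n \<in> A))) \<in> borel_measurable (ctmc_source q S)"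
    by (rule measurable_compose_countable[OF _ l]) measurable
  have p: "Measurable.pred (ctmc_source q S) (\<lambda>\<omega>. \<exists>n. ctmc_state x0 \<omega> n \<in> A)"
    by (rule pred_intros_countable) (rule state_pred)
  show ?thesis
    unfolding hit_exp_def[abs_def]
    using e p by measurable
qed


lemma AE_DJ:
  assumes y: "y \<in> S"
  shows "AE z in density lborel (exponential_density (Q y)) \<Otimes>\<^sub>M measure_pmf (jump_pmf q S y).
           0 \<le> fst z \<and> snd z \<in> S"
proof -
  interpret D: prob_space "density lborel (exponential_density (Q y))" by (rule prob_D[OF y])
  interpret J: prob_space "measure_pmf (jump_pmf q S y)" by (rule prob_space_measure_pmf)
  interpret P: pair_prob_space "density lborel (exponential_density (Q y))" "measure_pmf (jump_pmf q S y)" ..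
  show ?thesis
  proof (rule P.AE_pair_measure)
    have "{z \<in> space (density lborel (exponential_density (Q y)) \<Otimes>\<^sub>M measure_pmf (jump_pmf q S y)).
           0 \<le> fst z \<and> snd z \<in> S} = {t::real. 0 \<le> t} \<times> S"
      by (auto simp: space_pair_measure)
    also have "\<dots> \<in> sets (density lborel (exponential_density (Q y)) \<Otimes>\<^sub>M measure_pmf (jump_pmf q S y))"
      by (rule pair_measureI) auto
    finally show "{z \<in> space (density lborel (exponential_density (Q y)) \<Otimes>\<^sub>M measure_pmf (jump_pmf q S y)).
           0 \<le> fst z \<and> snd z \<in> S} \<in> sets (density lborel (exponential_density (Q y)) \<Otimes>\<^sub>M measure_pmf (jump_pmf q S y))" .
  next
    have "AE t in density lborel (exponential_density (Q y)). 0 \<le> t"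
    proof (subst AE_density)
      show "AE t in lborel. 0 < ennreal (exponential_density (Q y) t) \<longrightarrow> 0 \<le> t"
      proof (intro AE_I2 impI)
        fix t :: real assume "0 < ennreal (exponential_density (Q y) t)"
        then show "0 \<le> t" by (cases "t < 0") (auto simp: exponential_density_def)
      qed
    qed simp
    note a = this
    have b: "AE z in measure_pmf (jump_pmf q S y). z \<in> S"
      using set_pmf_jump[OF y] by (auto simp: AE_measure_pmf_iff)
    have c: "AE z in measure_pmf (jump_pmf q S y). 0 \<le> fst (t, z) \<and> snd (t, z) \<in> S" if t: "0 \<le> t" for t
      using b by (rule eventually_mono) (use t in simp)
    from a show "AE t in density lborel (exponential_density (Q y)).
       AE z in measure_pmf (jump_pmf q S y). 0 \<le> fst (t, z) \<and> snd (t, z) \<in> S"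
      by (rule eventually_mono) (rule c)
  qed
qed

lemma AE_step: "AE f in ctmc_step q S. \<forall>y\<in>S. 0 \<le> fst (f y) \<and> snd (f y) \<in> S"
  unfolding ctmc_step_def
  by (intro AE_finite_allI[OF fin] AE_PiM_component[where P="\<lambda>z. 0 \<le> fst z \<and> snd z \<in> S"] prob_DJ AE_DJ)

definition good :: "(nat \<Rightarrow> 's \<Rightarrow> real \<times> 's) \<Rightarrow> bool" where
  "good \<omega> \<longleftrightarrow> (\<forall>n. \<forall>y\<in>S. 0 \<le> fst (\<omega> n y) \<and> snd (\<omega> n y) \<in> S)"

lemma AE_good: "AE \<omega> in ctmc_source q S. good \<omega>"
  unfolding good_def ctmc_source_def
  by (subst AE_all_countable) (auto intro!: AE_PiM_component[where P="\<lambda>f. \<forall>y\<in>S. 0 \<le> fst (f y) \<and> snd (f y) \<in> S"] prob_step AE_step)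

lemma good_state: "good \<omega> \<Longrightarrow> x0 \<in> S \<Longrightarrow> ctmc_state x0 \<omega> n \<in> S"
  by (induction n) (auto simp: good_def)

lemma good_jt:
  assumes "good \<omega>" "x0 \<in> S" shows "0 \<le> ctmc_jump_time x0 \<omega> n"
  unfolding ctmc_jump_time_def ctmc_hold_def
  using good_state[OF assms] assms(1) by (intro sum_nonneg) (auto simp: good_def)

lemma hit_exp_nonneg: "0 \<le> hit_exp x0 A s \<omega>"
  by (simp add: hit_exp_def)

lemma good_hit_le1: "good \<omega> \<Longrightarrow> x0 \<in> S \<Longrightarrow> 0 \<le> s \<Longrightarrow> hit_exp x0 A s \<omega> \<le> 1"
  using good_jt[of \<omega> x0] by (auto simp: hit_exp_def mult_nonneg_nonneg)

lemma integrable_hit: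
  assumes "x0 \<in> S" "0 \<le> s"
  shows "integrable (ctmc_source q S) (hit_exp x0 A s)"
proof -
  interpret prob_space "ctmc_source q S" by (rule prob_source)
  show ?thesis
  proof (rule integrable_const_bound[where B=1])
    show "AE \<omega> in ctmc_source q S. norm (hit_exp x0 A s \<omega>) \<le> 1"
      using AE_good
    proof (rule eventually_mono)
      fix \<omega> assume "good \<omega>"
      then show "norm (hit_exp x0 A s \<omega>) \<le> 1"
        using good_hit_le1[OF _ assms, of \<omega> A] hit_exp_nonneg[of x0 A s \<omega>] by simp
    qed
  qed simp
qed

lemma hit_bounds:
  assumes "x0 \<in> S" "0 \<le> s"
  shows "0 \<le> hit_laplace q S x0 A s" "hit_laplace q S x0 A s \<le> 1"
proof -
  interpret prob_space "ctmc_source q S" by (rule prob_source)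
  show "0 \<le> hit_laplace q S x0 A s"
    unfolding hit_laplace_def by (intro integral_nonneg_AE) (simp add: hit_exp_nonneg)
  have "hit_laplace q S x0 A s \<le> integral\<^sup>L (ctmc_source q S) (\<lambda>_. 1)"
    unfolding hit_laplace_def
    by (intro integral_mono_AE integrable_hit assms)
       (auto intro: AE_mp[OF AE_good] simp: assms good_hit_le1)
  then show "hit_laplace q S x0 A s \<le> 1" by (simp add: prob_space)
qed

lemma nn_hit:
  assumes "x0 \<in> S" "0 \<le> s"
  shows "(\<integral>\<^sup>+ \<omega>. ennreal (hit_exp x0 A s \<omega>) \<partial>ctmc_source q S) = ennreal (hit_laplace q S x0 A s)"
  unfolding hit_laplace_def
  by (intro nn_integral_eq_integral integrable_hit assms) (simp add: hit_exp_nonneg)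

lemma hit_in_A: "x0 \<in> A \<Longrightarrow> hit_laplace q S x0 A s = 1"
proof -
  interpret prob_space "ctmc_source q S" by (rule prob_source)
  assume "x0 \<in> A"
  then have "hit_exp x0 A s = (\<lambda>_. 1)" by (intro ext) (simp add: hit_exp_in)
  then show ?thesis by (simp add: hit_laplace_def prob_space)
qed

lemma nn_integral_source_decomp:
  assumes f[measurable]: "f \<in> borel_measurable (ctmc_source q S)"
  shows "(\<integral>\<^sup>+ \<omega>. f \<omega> \<partial>ctmc_source q S) =
     (\<integral>\<^sup>+ x. (\<integral>\<^sup>+ \<omega>. f (case_nat x \<omega>) \<partial>ctmc_source q S) \<partial>ctmc_step q S)"
proof -
  interpret ST: prob_space "ctmc_step q S" by (rule prob_step)
  interpret SQ: sequence_space "ctmc_step q S" ..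
  interpret P: pair_sigma_finite "ctmc_step q S" "\<Pi>\<^sub>M i::nat\<in>UNIV. ctmc_step q S" ..
  have f'[measurable]: "f \<in> borel_measurable SQ.S" using f by (simp add: ctmc_source_def)
  have "(\<integral>\<^sup>+X. f X \<partial>SQ.S) = (\<integral>\<^sup>+X. f ((\<lambda>(s, \<omega>). case_nat s \<omega>) X) \<partial>(ctmc_step q S \<Otimes>\<^sub>M SQ.S))"
    by (subst SQ.PiM_iter[symmetric]) (simp add: nn_integral_distr f')
  also have "\<dots> = (\<integral>\<^sup>+x. \<integral>\<^sup>+X. f (case_nat x X) \<partial>SQ.S \<partial>ctmc_step q S)"
  proof -
    have m: "(\<lambda>p. f (case_nat (fst p) (snd p))) \<in> borel_measurable (ctmc_step q S \<Otimes>\<^sub>M SQ.S)"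
      by measurable
    have "(\<integral>\<^sup>+X. f ((\<lambda>(s, \<omega>). case_nat s \<omega>) X) \<partial>(ctmc_step q S \<Otimes>\<^sub>M SQ.S))
        = (\<integral>\<^sup>+X. f (case_nat (fst X) (snd X)) \<partial>(ctmc_step q S \<Otimes>\<^sub>M SQ.S))"
      by (intro nn_integral_cong) (auto simp: split_beta)
    also have "\<dots> = (\<integral>\<^sup>+x. \<integral>\<^sup>+X. f (case_nat x X) \<partial>SQ.S \<partial>ctmc_step q S)"
      using SQ.nn_integral_fst[OF m] by simp
    finally show ?thesis .
  qed
  finally show ?thesis by (simp add: ctmc_source_def)
qed


lemma first_step:
  assumes x0: "x0 \<in> S" and nA: "x0 \<notin> A" and s: "0 \<le> s"
  shows "(Q x0 + s) * hit_laplace q S x0 A s = (\<Sum>y\<in>S - {x0}. q x0 y * hit_laplace q S y A s)"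
proof -
  define h where "h y = hit_laplace q S y A s" for y
  define NN where "NN y = (\<integral>\<^sup>+ \<omega>. ennreal (hit_exp y A s \<omega>) \<partial>ctmc_source q S)" for y
  let ?D = "density lborel (exponential_density (Q x0))"
  let ?J = "measure_pmf (jump_pmf q S x0)"
  interpret J: prob_space ?J by (rule prob_space_measure_pmf)
  have NNm: "NN \<in> borel_measurable ?J" by (simp add: measurable_pmf_any)
  have "ennreal (h x0) = NN x0" unfolding h_def NN_def by (rule nn_hit[symmetric, OF x0 s])
  also have "\<dots> = (\<integral>\<^sup>+ x. (\<integral>\<^sup>+ \<omega>. ennreal (hit_exp x0 A s (case_nat x \<omega>)) \<partial>ctmc_source q S) \<partial>ctmc_step q S)"
    unfolding NN_def by (rule nn_integral_source_decomp) measurable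
  also have "\<dots> = (\<integral>\<^sup>+ x. ennreal (exp (- s * fst (x x0))) * NN (snd (x x0)) \<partial>ctmc_step q S)"
  proof (intro nn_integral_cong)
    fix x :: "'s \<Rightarrow> real \<times> 's"
    have "(\<integral>\<^sup>+ \<omega>. ennreal (hit_exp x0 A s (case_nat x \<omega>)) \<partial>ctmc_source q S)
        = (\<integral>\<^sup>+ \<omega>. ennreal (exp (- s * fst (x x0))) * ennreal (hit_exp (snd (x x0)) A s \<omega>) \<partial>ctmc_source q S)"
      by (intro nn_integral_cong) (simp add: hit_exp_shift[OF nA] ennreal_mult hit_exp_nonneg)
    also have "\<dots> = ennreal (exp (- s * fst (x x0))) * NN (snd (x x0))"
      unfolding NN_def by (rule nn_integral_cmult) measurable
    finally show "(\<integral>\<^sup>+ \<omega>. ennreal (hit_exp x0 A s (case_nat x \<omega>)) \<partial>ctmc_source q S)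
        = ennreal (exp (- s * fst (x x0))) * NN (snd (x x0))" .
  qed
  also have "\<dots> = (\<integral>\<^sup>+ z. ennreal (exp (- s * fst z)) * NN (snd z) \<partial>(?D \<Otimes>\<^sub>M ?J))"
  proof -
    have c: "(\<lambda>x. x x0) \<in> measurable (ctmc_step q S) (?D \<Otimes>\<^sub>M ?J)"
      unfolding ctmc_step_def using x0 by (rule measurable_component_singleton)
    have g: "(\<lambda>z. ennreal (exp (- s * fst z)) * NN (snd z)) \<in> borel_measurable (?D \<Otimes>\<^sub>M ?J)"
    proof -
      have "(\<lambda>z. NN (snd z)) \<in> borel_measurable (?D \<Otimes>\<^sub>M ?J)"
        by (rule measurable_compose[OF measurable_snd NNm])
      then show ?thesis by measurable
    qed
    have "(\<integral>\<^sup>+ z. ennreal (exp (- s * fst z)) * NN (snd z) \<partial>(?D \<Otimes>\<^sub>M ?J))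
       = (\<integral>\<^sup>+ z. ennreal (exp (- s * fst z)) * NN (snd z) \<partial>distr (ctmc_step q S) (?D \<Otimes>\<^sub>M ?J) (\<lambda>x. x x0))"
      unfolding ctmc_step_def by (subst distr_PiM_component) (auto intro: prob_DJ x0)
    also have "\<dots> = (\<integral>\<^sup>+ x. ennreal (exp (- s * fst (x x0))) * NN (snd (x x0)) \<partial>ctmc_step q S)"
      by (rule nn_integral_distr[OF c]) (use g in simp)
    finally show ?thesis by simp
  qed
  also have "\<dots> = (\<integral>\<^sup>+ t. \<integral>\<^sup>+ y. ennreal (exp (- s * t)) * NN y \<partial>?J \<partial>?D)"
  proof -
    have g: "(\<lambda>z. ennreal (exp (- s * fst z)) * NN (snd z)) \<in> borel_measurable (?D \<Otimes>\<^sub>M ?J)"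
    proof -
      have "(\<lambda>z. NN (snd z)) \<in> borel_measurable (?D \<Otimes>\<^sub>M ?J)"
        by (rule measurable_compose[OF measurable_snd NNm])
      then show ?thesis by measurable
    qed
    from sigma_finite_measure.nn_integral_fst[OF prob_space_imp_sigma_finite[OF prob_space_measure_pmf] g]
    show ?thesis by simp
  qed
  also have "\<dots> = (\<integral>\<^sup>+ t. ennreal (exp (- s * t)) * (\<integral>\<^sup>+ y. NN y \<partial>?J) \<partial>?D)"
    by (intro nn_integral_cong nn_integral_cmult NNm)
  also have "\<dots> = (\<integral>\<^sup>+ t. ennreal (exp (- s * t)) \<partial>?D) * (\<integral>\<^sup>+ y. NN y \<partial>?J)"
    by (rule nn_integral_multc) simp
  also have "(\<integral>\<^sup>+ t. ennreal (exp (- s * t)) \<partial>?D) = ennreal (Q x0 / (Q x0 + s))"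
    by (rule laplace_exponential[OF Qpos[OF x0] s])
  also have "(\<integral>\<^sup>+ y. NN y \<partial>?J) = (\<Sum>y\<in>S - {x0}. NN y * pmf (jump_pmf q S x0) y)"
    by (rule nn_integral_measure_pmf_support) (use fin set_pmf_jump[OF x0] in auto)
  also have "\<dots> = (\<Sum>y\<in>S - {x0}. ennreal (h y * (q x0 y / Q x0)))"
  proof (intro sum.cong refl)
    fix y assume y: "y \<in> S - {x0}"
    have "NN y = ennreal (h y)" unfolding NN_def h_def using y s by (intro nn_hit) auto
    moreover have "0 \<le> h y" unfolding h_def using y s by (intro hit_bounds) auto
    moreover have "0 \<le> q x0 y / Q x0" using qnn[OF x0] Qpos[OF x0] y by auto
    ultimately show "NN y * ennreal (pmf (jump_pmf q S x0) y) = ennreal (h y * (q x0 y / Q x0))"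
      using y x0 by (simp add: pmf_jump ennreal_mult[symmetric] del: times_divide_eq_right)
  qed
  also have "\<dots> = ennreal (\<Sum>y\<in>S - {x0}. h y * (q x0 y / Q x0))"
  proof (rule sum_ennreal)
    fix y assume y: "y \<in> S - {x0}"
    have "0 \<le> h y" unfolding h_def using y s by (intro hit_bounds) auto
    moreover have "0 \<le> q x0 y / Q x0" using qnn[OF x0] Qpos[OF x0] y by auto
    ultimately show "0 \<le> h y * (q x0 y / Q x0)" by (rule mult_nonneg_nonneg)
  qed
  finally have eq0: "ennreal (h x0) = ennreal (Q x0 / (Q x0 + s)) * ennreal (\<Sum>y\<in>S - {x0}. h y * (q x0 y / Q x0))" .
  have qq: "0 \<le> Q x0 / (Q x0 + s)" using Qpos[OF x0] s by simp
  have sn: "0 \<le> (\<Sum>y\<in>S - {x0}. h y * (q x0 y / Q x0))"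
    using Qpos[OF x0] s qnn[OF x0] hit_bounds(1)[OF _ s]
    by (intro sum_nonneg mult_nonneg_nonneg divide_nonneg_nonneg) (auto simp: h_def)
  have eq: "ennreal (h x0) = ennreal (Q x0 / (Q x0 + s) * (\<Sum>y\<in>S - {x0}. h y * (q x0 y / Q x0)))"
    using eq0 by (simp only: ennreal_mult[OF qq sn])
  have nn2: "0 \<le> Q x0 / (Q x0 + s) * (\<Sum>y\<in>S - {x0}. h y * (q x0 y / Q x0))"
    using Qpos[OF x0] s qnn[OF x0] hit_bounds(1)[OF _ s]
    by (intro mult_nonneg_nonneg sum_nonneg divide_nonneg_nonneg) (auto simp: h_def)
  have "h x0 = Q x0 / (Q x0 + s) * (\<Sum>y\<in>S - {x0}. h y * (q x0 y / Q x0))"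
    using eq nn2 hit_bounds(1)[OF x0 s] by (simp add: h_def)
  also have "\<dots> = (\<Sum>y\<in>S - {x0}. q x0 y * h y) / (Q x0 + s)"
  proof -
    have "(\<Sum>y\<in>S - {x0}. h y * (q x0 y / Q x0)) = (\<Sum>y\<in>S - {x0}. q x0 y * h y) / Q x0"
      by (simp add: sum_divide_distrib mult.commute)
    then show ?thesis using Qpos[OF x0] s by simp
  qed
  finally show ?thesis
    using Qpos[OF x0] s by (simp add: h_def field_simps)
qed


lemma hit_unique:
  assumes s: "0 < s"
    and uA: "\<And>x. x \<in> S \<Longrightarrow> x \<in> A \<Longrightarrow> u x = 1"
    and uS: "\<And>x. x \<in> S \<Longrightarrow> x \<notin> A \<Longrightarrow> (Q x + s) * u x = (\<Sum>y\<in>S - {x}. q x y * u y)"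
    and x: "x \<in> S"
  shows "u x = hit_laplace q S x A s"
proof -
  define d where "d y = u y - hit_laplace q S y A s" for y
  define M where "M = Max ((\<lambda>y. \<bar>d y\<bar>) ` S)"
  have Sne: "S \<noteq> {}" using x by auto
  have dM: "\<bar>d y\<bar> \<le> M" if "y \<in> S" for y
    unfolding M_def using fin that by (intro Max_ge) auto
  have "M \<in> (\<lambda>y. \<bar>d y\<bar>) ` S" unfolding M_def using fin Sne by (intro Max_in) auto
  then obtain z where z: "z \<in> S" "M = \<bar>d z\<bar>" by auto
  have "M \<le> 0"
  proof (cases "z \<in> A")
    case True
    then show ?thesis using z uA hit_in_A by (simp add: d_def)
  next
    case False
    have eq: "(Q z + s) * d z = (\<Sum>y\<in>S - {z}. q z y * d y)"
      using uS[OF z(1) False] first_step[OF z(1) False, of s] s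
      by (simp add: d_def algebra_simps sum_subtractf)
    have "(Q z + s) * M = \<bar>(Q z + s) * d z\<bar>"
      using z Qpos[OF z(1)] s by (simp add: abs_mult)
    also have "\<dots> \<le> (\<Sum>y\<in>S - {z}. \<bar>q z y * d y\<bar>)"
      unfolding eq by (rule sum_abs)
    also have "\<dots> \<le> (\<Sum>y\<in>S - {z}. q z y * M)"
      using qnn[OF z(1)] dM by (intro sum_mono) (auto simp: abs_mult intro!: mult_left_mono)
    also have "\<dots> = Q z * M"
      by (simp add: total_rate_def sum_distrib_right)
    finally have "s * M \<le> 0" by (simp add: algebra_simps)
    then show ?thesis using s by (simp add: mult_le_0_iff)
  qed
  then have "d x = 0" using dM[OF x] by simp
  then show ?thesis by (simp add: d_def)
qed

lemma hit_two_bound: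
  assumes x0: "x0 \<in> S" and s: "0 \<le> s" and g: "0 \<le> g"
  shows "2 * hit_laplace q S x0 A (s + g) - hit_laplace q S x0 A (s + 2 * g) \<le> 1"
proof -
  interpret prob_space "ctmc_source q S" by (rule prob_source)
  have i1: "integrable (ctmc_source q S) (hit_exp x0 A (s + g))"
    using s g by (intro integrable_hit x0) simp
  have i2: "integrable (ctmc_source q S) (hit_exp x0 A (s + 2 * g))"
    using s g by (intro integrable_hit x0) simp
  have "2 * hit_laplace q S x0 A (s + g) - hit_laplace q S x0 A (s + 2 * g)
      = integral\<^sup>L (ctmc_source q S) (\<lambda>\<omega>. 2 * hit_exp x0 A (s + g) \<omega> - hit_exp x0 A (s + 2 * g) \<omega>)"
    unfolding hit_laplace_def using i1 i2 by simp
  also have "\<dots> \<le> integral\<^sup>L (ctmc_source q S) (\<lambda>_. 1)"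
  proof (intro integral_mono_AE)
    show "integrable (ctmc_source q S) (\<lambda>\<omega>. 2 * hit_exp x0 A (s + g) \<omega> - hit_exp x0 A (s + 2 * g) \<omega>)"
      using i1 i2 by simp
    show "AE \<omega> in ctmc_source q S. 2 * hit_exp x0 A (s + g) \<omega> - hit_exp x0 A (s + 2 * g) \<omega> \<le> 1"
      using AE_good
    proof (rule eventually_mono)
      fix \<omega> assume gd: "good \<omega>"
      show "2 * hit_exp x0 A (s + g) \<omega> - hit_exp x0 A (s + 2 * g) \<omega> \<le> 1"
      proof (cases "\<exists>n. ctmc_state x0 \<omega> n \<in> A")
        case True
        define t where "t = ctmc_jump_time x0 \<omega> (LEAST n. ctmc_state x0 \<omega> n \<in> A)"
        have t: "0 \<le> t" unfolding t_def by (rule good_jt[OF gd x0])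
        define a where "a = exp (- s * t)"
        define b where "b = exp (- g * t)"
        have a: "0 \<le> a" "a \<le> 1" using s t by (auto simp: a_def mult_nonneg_nonneg)
        have e1: "exp (- (s + g) * t) = a * b" by (simp add: a_def b_def exp_add[symmetric] algebra_simps)
        have e2: "exp (- (s + 2 * g) * t) = a * b * b"
          by (simp add: a_def b_def exp_add[symmetric] algebra_simps)
        have "2 * b - b * b \<le> 1" using sum_squares_ge_zero[of "1 - b" 0]
          by (simp add: power2_eq_square algebra_simps)
        then have "a * (2 * b - b * b) \<le> a * 1" using a by (intro mult_left_mono) auto
        moreover have "hit_exp x0 A (s + g) \<omega> = a * b"
          by (simp only: hit_exp_def if_P[OF True] t_def[symmetric] e1)
        moreover have "hit_exp x0 A (s + 2 * g) \<omega> = a * b * b"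
          by (simp only: hit_exp_def if_P[OF True] t_def[symmetric] e2)
        ultimately show ?thesis using a by (simp add: algebra_simps)
      next
        case False then show ?thesis by (simp add: hit_exp_def)
      qed
    qed
  qed simp
  finally show ?thesis by (simp add: prob_space)
qed

end


lemma sum_if_image:
  assumes T: "finite T" and inj: "inj_on g Y" and sub: "g ` Y \<subseteq> T"
  shows "(\<Sum>\<sigma>\<in>T. if \<sigma> \<in> g ` Y then F \<sigma> else 0) = (\<Sum>y\<in>Y. F (g y))"
proof -
  have "(\<Sum>\<sigma>\<in>T. if \<sigma> \<in> g ` Y then F \<sigma> else 0) = (\<Sum>\<sigma>\<in>{\<sigma>\<in>T. \<sigma> \<in> g ` Y}. F \<sigma>)"
    using T by (rule sum.inter_filter[symmetric])
  also have "{\<sigma>\<in>T. \<sigma> \<in> g ` Y} = g ` Y" using sub by auto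
  also have "(\<Sum>\<sigma>\<in>g ` Y. F \<sigma>) = (\<Sum>y\<in>Y. F (g y))" using inj by (rule sum.reindex[unfolded comp_def])
  finally show ?thesis .
qed

definition nbr :: "'v set set \<Rightarrow> 'v \<Rightarrow> 'v set" where
  "nbr E x = {y. {x, y} \<in> E}"

locale graph_setup =
  fixes V :: "'v set" and E :: "'v set set" and lam :: real and a b :: 'v
  assumes sg: "simple_graph V E" and conn: "graph_connected V E"
    and lam: "0 < lam" and ab: "{a, b} \<in> E"
begin

lemma finV: "finite V" using sg by (simp add: simple_graph_def)

lemma edge_in: assumes "{x, y} \<in> E" shows "x \<in> V" "y \<in> V" "x \<noteq> y"
proof -
  from sg assms obtain a' b' where "a' \<in> V" "b' \<in> V" "a' \<noteq> b'" "{x, y} = {a', b'}"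
    unfolding simple_graph_def by blast
  then show "x \<in> V" "y \<in> V" "x \<noteq> y" by (auto simp: doubleton_eq_iff)
qed

lemma nbr_sub: "nbr E x \<subseteq> V" using edge_in by (auto simp: nbr_def)
lemma nbr_fin: "finite (nbr E x)" using nbr_sub finV by (rule finite_subset)
lemma nbr_not_self: "x \<notin> nbr E x" using edge_in(3)[of x x] by (auto simp: nbr_def)
lemma nbr_sym: "y \<in> nbr E x \<longleftrightarrow> x \<in> nbr E y" by (auto simp: nbr_def insert_commute)
lemma deg_card: "deg E x = card (nbr E x)" by (simp add: deg_def nbr_def)

lemma nbr_ne: assumes x: "x \<in> V" shows "nbr E x \<noteq> {}"
proof -
  have aV: "a \<in> V" using edge_in[OF ab] by simp
  have "(x, a) \<in> {(p, q). {p, q} \<in> E}\<^sup>*" using conn x aV by (auto simp: graph_connected_def)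
  then show ?thesis
  proof (rule converse_rtranclE)
    assume "x = a"
    then show ?thesis using ab by (auto simp: nbr_def)
  next
    fix w assume "(x, w) \<in> {(p, q). {p, q} \<in> E}"
    then show ?thesis by (auto simp: nbr_def)
  qed
qed

lemma deg_pos: "x \<in> V \<Longrightarrow> 0 < deg E x"
  using nbr_ne nbr_fin by (simp add: deg_card card_gt_0_iff)

lemma walk2_gen:
  assumes x: "x1 \<in> V" "x2 \<in> V"
  shows "(\<Sum>\<sigma>\<in>V \<times> V - {(x1, x2)}. walk2_rate V E lam (x1, x2) \<sigma> * u \<sigma>)
    = lam / deg E x1 * (\<Sum>y\<in>nbr E x1. u (y, x2)) + lam / deg E x2 * (\<Sum>y\<in>nbr E x2. u (x1, y))"
proof -
  let ?T = "V \<times> V - {(x1, x2)}"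
  have r: "walk2_rate V E lam (x1, x2) \<sigma> * u \<sigma> =
     (if \<sigma> \<in> (\<lambda>y. (y, x2)) ` nbr E x1 then lam / deg E x1 * u \<sigma> else 0)
   + (if \<sigma> \<in> (\<lambda>y. (x1, y)) ` nbr E x2 then lam / deg E x2 * u \<sigma> else 0)" for \<sigma>
    by (cases \<sigma>) (auto simp: walk2_rate_def nbr_def algebra_simps)
  have fT: "finite ?T" using finV by simp
  have s1: "(\<Sum>\<sigma>\<in>?T. if \<sigma> \<in> (\<lambda>y. (y, x2)) ` nbr E x1 then lam / deg E x1 * u \<sigma> else 0)
      = (\<Sum>y\<in>nbr E x1. lam / deg E x1 * u (y, x2))"
    by (rule sum_if_image[OF fT]) (use nbr_sub nbr_not_self x in \<open>auto simp: inj_on_def\<close>)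
  have s2: "(\<Sum>\<sigma>\<in>?T. if \<sigma> \<in> (\<lambda>y. (x1, y)) ` nbr E x2 then lam / deg E x2 * u \<sigma> else 0)
      = (\<Sum>y\<in>nbr E x2. lam / deg E x2 * u (x1, y))"
    by (rule sum_if_image[OF fT]) (use nbr_sub nbr_not_self x in \<open>auto simp: inj_on_def\<close>)
  show ?thesis
    unfolding r sum.distrib s1 s2 by (simp add: sum_distrib_left)
qed

lemma walk2_total: "x1 \<in> V \<Longrightarrow> x2 \<in> V \<Longrightarrow> total_rate (walk2_rate V E lam) (V \<times> V) (x1, x2) = 2 * lam"
  using walk2_gen[of x1 x2 "\<lambda>_. 1"] deg_pos[of x1] deg_pos[of x2]
  by (simp add: total_rate_def deg_card)

lemma walk2_ctmc: "ctmc (walk2_rate V E lam) (V \<times> V)"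
proof
  show "finite (V \<times> V)" using finV by simp
  show "0 < total_rate (walk2_rate V E lam) (V \<times> V) x" if "x \<in> V \<times> V" for x
    using that walk2_total lam by (cases x) auto
  show "0 \<le> walk2_rate V E lam x y" if "x \<in> V \<times> V" "y \<in> V \<times> V" for x y
    using that lam by (cases x; cases y) (auto simp: walk2_rate_def)
qed


abbreviation "Diag \<equiv> {(x, y). x \<in> V \<and> x = y}"

lemma mm_def': "meet_laplace V E lam x y \<sigma> = hit_laplace (walk2_rate V E lam) (V \<times> V) (x, y) Diag \<sigma>"
  by (simp add: meet_laplace_def)

lemma mm_diag: "x \<in> V \<Longrightarrow> meet_laplace V E lam x x \<sigma> = 1"
proof -
  interpret W: ctmc "walk2_rate V E lam" "V \<times> V" by (rule walk2_ctmc)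
  assume "x \<in> V" then show ?thesis unfolding mm_def' by (intro W.hit_in_A) auto
qed

lemma mm_bounds:
  assumes "x \<in> V" "y \<in> V" "0 \<le> \<sigma>"
  shows "0 \<le> meet_laplace V E lam x y \<sigma>" "meet_laplace V E lam x y \<sigma> \<le> 1"
proof -
  interpret W: ctmc "walk2_rate V E lam" "V \<times> V" by (rule walk2_ctmc)
  show "0 \<le> meet_laplace V E lam x y \<sigma>" "meet_laplace V E lam x y \<sigma> \<le> 1"
    unfolding mm_def' using assms by (intro W.hit_bounds; auto)+
qed

lemma mm_two_bound:
  assumes "x \<in> V" "y \<in> V" "0 \<le> s" "0 \<le> g"
  shows "2 * meet_laplace V E lam x y (s + g) - meet_laplace V E lam x y (s + 2 * g) \<le> 1"
proof -
  interpret W: ctmc "walk2_rate V E lam" "V \<times> V" by (rule walk2_ctmc)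
  show ?thesis unfolding mm_def' using assms by (intro W.hit_two_bound) auto
qed

lemma mm_step:
  assumes x: "x \<in> V" "y \<in> V" "x \<noteq> y" and \<sigma>: "0 \<le> \<sigma>"
  shows "(2 * lam + \<sigma>) * meet_laplace V E lam x y \<sigma> =
    lam / deg E x * (\<Sum>z\<in>nbr E x. meet_laplace V E lam z y \<sigma>) + lam / deg E y * (\<Sum>z\<in>nbr E y. meet_laplace V E lam x z \<sigma>)"
proof -
  interpret W: ctmc "walk2_rate V E lam" "V \<times> V" by (rule walk2_ctmc)
  have "(total_rate (walk2_rate V E lam) (V \<times> V) (x, y) + \<sigma>) * hit_laplace (walk2_rate V E lam) (V \<times> V) (x, y) Diag \<sigma>
     = (\<Sum>p\<in>V \<times> V - {(x, y)}. walk2_rate V E lam (x, y) p * hit_laplace (walk2_rate V E lam) (V \<times> V) p Diag \<sigma>)"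
    using x \<sigma> by (intro W.first_step) auto
  then show ?thesis
    using x by (simp add: walk2_total walk2_gen mm_def')
qed

lemma mm_unique:
  assumes \<sigma>: "0 < \<sigma>"
    and uD: "\<And>x. x \<in> V \<Longrightarrow> u (x, x) = 1"
    and uS: "\<And>x y. x \<in> V \<Longrightarrow> y \<in> V \<Longrightarrow> x \<noteq> y \<Longrightarrow> (2 * lam + \<sigma>) * u (x, y) =
       lam / deg E x * (\<Sum>z\<in>nbr E x. u (z, y)) + lam / deg E y * (\<Sum>z\<in>nbr E y. u (x, z))"
    and xy: "x \<in> V" "y \<in> V"
  shows "u (x, y) = meet_laplace V E lam x y \<sigma>"
proof -
  interpret W: ctmc "walk2_rate V E lam" "V \<times> V" by (rule walk2_ctmc)
  show ?thesis unfolding mm_def'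
  proof (rule W.hit_unique[OF \<sigma>])
    fix p assume "p \<in> V \<times> V" "p \<in> Diag" then show "u p = 1" using uD by auto
  next
    fix p assume p: "p \<in> V \<times> V" "p \<notin> Diag"
    then obtain x1 x2 where "p = (x1, x2)" "x1 \<in> V" "x2 \<in> V" "x1 \<noteq> x2" by auto
    then show "(total_rate (walk2_rate V E lam) (V \<times> V) p + \<sigma>) * u p =
      (\<Sum>y\<in>V \<times> V - {p}. walk2_rate V E lam p y * u y)"
      using uS by (simp add: walk2_total walk2_gen)
  qed (use xy in auto)
qed

lemma mm_swap:
  assumes \<sigma>: "0 < \<sigma>" and xy: "x \<in> V" "y \<in> V"
  shows "meet_laplace V E lam y x \<sigma> = meet_laplace V E lam x y \<sigma>"
proof -
  have "(\<lambda>p. meet_laplace V E lam (snd p) (fst p) \<sigma>) (x, y) = meet_laplace V E lam x y \<sigma>"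
  proof (rule mm_unique[OF \<sigma> _ _ xy])
    fix x assume "x \<in> V" then show "meet_laplace V E lam (snd (x, x)) (fst (x, x)) \<sigma> = 1" by (simp add: mm_diag)
  next
    fix x y assume "x \<in> V" "y \<in> V" "x \<noteq> y"
    then show "(2 * lam + \<sigma>) * meet_laplace V E lam (snd (x, y)) (fst (x, y)) \<sigma> =
      lam / deg E x * (\<Sum>z\<in>nbr E x. meet_laplace V E lam (snd (z, y)) (fst (z, y)) \<sigma>) +
      lam / deg E y * (\<Sum>z\<in>nbr E y. meet_laplace V E lam (snd (x, z)) (fst (x, z)) \<sigma>)"
      using mm_step[of y x \<sigma>] \<sigma> by simp
  qed
  then show ?thesis by simp
qed

lemma auto_nbr:
  assumes f: "graph_automorphism V E f" and x: "x \<in> V"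
  shows "nbr E (f x) = f ` nbr E x" "inj_on f (nbr E x)" "deg E (f x) = deg E x"
proof -
  have bij: "bij_betw f V V" and pres: "\<And>a b. a \<in> V \<Longrightarrow> b \<in> V \<Longrightarrow> {a, b} \<in> E \<longleftrightarrow> {f a, f b} \<in> E"
    using f by (auto simp: graph_automorphism_def)
  show "nbr E (f x) = f ` nbr E x"
  proof
    show "nbr E (f x) \<subseteq> f ` nbr E x"
    proof
      fix z assume z: "z \<in> nbr E (f x)"
      then have "z \<in> V" using nbr_sub by auto
      then obtain w where w: "w \<in> V" "z = f w" using bij by (auto simp: bij_betw_def)
      then show "z \<in> f ` nbr E x" using z pres[OF x w(1)] by (auto simp: nbr_def)
    qed
  next
    show "f ` nbr E x \<subseteq> nbr E (f x)"
      using pres[OF x] nbr_sub by (auto simp: nbr_def)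
  qed
  show "inj_on f (nbr E x)" using bij nbr_sub by (auto simp: bij_betw_def intro: inj_on_subset)
  then show "deg E (f x) = deg E x"
    using \<open>nbr E (f x) = f ` nbr E x\<close> by (simp add: deg_card card_image)
qed

lemma mm_auto:
  assumes f: "graph_automorphism V E f" and \<sigma>: "0 < \<sigma>" and xy: "x \<in> V" "y \<in> V"
  shows "meet_laplace V E lam (f x) (f y) \<sigma> = meet_laplace V E lam x y \<sigma>"
proof -
  have bij: "bij_betw f V V" using f by (auto simp: graph_automorphism_def)
  have fV: "z \<in> V \<Longrightarrow> f z \<in> V" for z using bij by (auto simp: bij_betw_def)
  have "(\<lambda>p. meet_laplace V E lam (f (fst p)) (f (snd p)) \<sigma>) (x, y) = meet_laplace V E lam x y \<sigma>"
  proof (rule mm_unique[OF \<sigma> _ _ xy])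
    fix x assume "x \<in> V" then show "meet_laplace V E lam (f (fst (x, x))) (f (snd (x, x))) \<sigma> = 1"
      by (simp add: mm_diag fV)
  next
    fix x y assume xy: "x \<in> V" "y \<in> V" "x \<noteq> y"
    have fxy: "f x \<noteq> f y" using bij xy by (auto simp: bij_betw_def inj_on_def)
    have s1: "(\<Sum>z\<in>nbr E (f x). meet_laplace V E lam z (f y) \<sigma>) = (\<Sum>z\<in>nbr E x. meet_laplace V E lam (f z) (f y) \<sigma>)"
      unfolding auto_nbr(1)[OF f xy(1)] by (rule sum.reindex[OF auto_nbr(2)[OF f xy(1)], unfolded comp_def])
    have s2: "(\<Sum>z\<in>nbr E (f y). meet_laplace V E lam (f x) z \<sigma>) = (\<Sum>z\<in>nbr E y. meet_laplace V E lam (f x) (f z) \<sigma>)"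
      unfolding auto_nbr(1)[OF f xy(2)] by (rule sum.reindex[OF auto_nbr(2)[OF f xy(2)], unfolded comp_def])
    show "(2 * lam + \<sigma>) * meet_laplace V E lam (f (fst (x, y))) (f (snd (x, y))) \<sigma> =
      lam / deg E x * (\<Sum>z\<in>nbr E x. meet_laplace V E lam (f (fst (z, y))) (f (snd (z, y))) \<sigma>) +
      lam / deg E y * (\<Sum>z\<in>nbr E y. meet_laplace V E lam (f (fst (x, z))) (f (snd (x, z))) \<sigma>)"
      using mm_step[OF fV[OF xy(1)] fV[OF xy(2)] fxy, of \<sigma>] \<sigma> s1 s2
      by (simp add: auto_nbr(3)[OF f xy(1)] auto_nbr(3)[OF f xy(2)])
  qed
  then show ?thesis by simp
qed


lemma mm_edge:
  assumes et: "edge_transitive V E" and \<sigma>: "0 < \<sigma>" and e: "{x, y} \<in> E"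
  shows "meet_laplace V E lam x y \<sigma> = meet_laplace V E lam a b \<sigma>"
proof -
  obtain f where f: "graph_automorphism V E f" "f ` {a, b} = {x, y}"
    using et ab e unfolding edge_transitive_def by blast
  have aV: "a \<in> V" "b \<in> V" using edge_in[OF ab] by auto
  have xV: "x \<in> V" "y \<in> V" using edge_in[OF e] by auto
  from f(2) have "(f a = x \<and> f b = y) \<or> (f a = y \<and> f b = x)" by (auto simp: doubleton_eq_iff)
  then show ?thesis
  proof
    assume "f a = x \<and> f b = y"
    then show ?thesis using mm_auto[OF f(1) \<sigma> aV] by simp
  next
    assume "f a = y \<and> f b = x"
    then show ?thesis using mm_auto[OF f(1) \<sigma> aV] mm_swap[OF \<sigma> xV] by simp
  qed
qed

lemma sum_rec_term:
  fixes u :: "'s \<Rightarrow> real" and g :: real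
  assumes "finite T"
  shows "(\<Sum>\<sigma>'\<in>T. (if P \<and> r = \<sigma>' then g else 0) * u \<sigma>') = (if P \<and> r \<in> T then g * u r else 0)"
proof -
  have "(\<Sum>\<sigma>'\<in>T. (if P \<and> r = \<sigma>' then g else 0) * u \<sigma>') = (\<Sum>\<sigma>'\<in>T. if \<sigma>' = r then (if P then g * u r else 0) else 0)"
    by (intro sum.cong) auto
  also have "\<dots> = (if P \<and> r \<in> T then g * u r else 0)"
    using assms by (simp add: sum.delta)
  finally show ?thesis .
qed

lemma sum_move_term:
  fixes u :: "'s \<Rightarrow> real" and c :: real
  assumes T: "finite T" and Y: "finite Y" and sub: "F ` Y \<subseteq> T"
  shows "(\<Sum>\<sigma>'\<in>T. (\<Sum>y\<in>{y\<in>Y. F y = \<sigma>'}. c) * u \<sigma>') = (\<Sum>y\<in>Y. c * u (F y))"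
proof -
  have "(\<Sum>\<sigma>'\<in>T. (\<Sum>y\<in>{y\<in>Y. F y = \<sigma>'}. c) * u \<sigma>') = (\<Sum>\<sigma>'\<in>T. \<Sum>y\<in>{y\<in>Y. F y = \<sigma>'}. c * u (F y))"
    by (intro sum.cong refl) (auto simp: sum_distrib_right)
  also have "\<dots> = (\<Sum>y\<in>Y. c * u (F y))"
    by (rule sum.group[OF Y T sub])
  finally show ?thesis .
qed

lemma nrm_pos: "\<exists>c d. sis_normalize (x1, x2, b1, b2) = (x1, x2, c, d)"
  by (auto simp: sis_normalize_def)

lemma finite_states: "finite (sis_states V)"
  using finV by (simp add: sis_states_def)

lemma sis_gen:
  assumes x: "x1 \<in> V" "x2 \<in> V"
  shows "(\<Sum>\<sigma>'\<in>sis_states V - {(x1, x2, ba, bb)}. sis_rate V E lam gam (x1, x2, ba, bb) \<sigma>' * u \<sigma>')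
    = lam / deg E x1 * (\<Sum>y\<in>nbr E x1. u (sis_normalize (y, x2, ba, bb)))
    + lam / deg E x2 * (\<Sum>y\<in>nbr E x2. u (sis_normalize (x1, y, ba, bb)))
    + (if ba \<and> sis_normalize (x1, x2, False, bb) \<noteq> (x1, x2, ba, bb) then gam * u (sis_normalize (x1, x2, False, bb)) else 0)
    + (if bb \<and> sis_normalize (x1, x2, ba, False) \<noteq> (x1, x2, ba, bb) then gam * u (sis_normalize (x1, x2, ba, False)) else 0)"
proof -
  let ?T = "sis_states V - {(x1, x2, ba, bb)}"
  let ?F1 = "\<lambda>y. sis_normalize (y, x2, ba, bb)"
  let ?F2 = "\<lambda>y. sis_normalize (x1, y, ba, bb)"
  let ?R1 = "sis_normalize (x1, x2, False, bb)"
  let ?R2 = "sis_normalize (x1, x2, ba, False)"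
  have fT: "finite ?T" using finite_states by simp
  have set1: "{y \<in> V. {x1, y} \<in> E \<and> ?F1 y = \<sigma>'} = {y \<in> nbr E x1. ?F1 y = \<sigma>'}" for \<sigma>'
    using nbr_sub by (auto simp: nbr_def)
  have set2: "{y \<in> V. {x2, y} \<in> E \<and> ?F2 y = \<sigma>'} = {y \<in> nbr E x2. ?F2 y = \<sigma>'}" for \<sigma>'
    using nbr_sub by (auto simp: nbr_def)
  have r: "sis_rate V E lam gam (x1, x2, ba, bb) \<sigma>' * u \<sigma>' =
      (\<Sum>y\<in>{y \<in> nbr E x1. ?F1 y = \<sigma>'}. lam / deg E x1) * u \<sigma>'
    + (\<Sum>y\<in>{y \<in> nbr E x2. ?F2 y = \<sigma>'}. lam / deg E x2) * u \<sigma>'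
    + (if ba \<and> ?R1 = \<sigma>' then gam else 0) * u \<sigma>'
    + (if bb \<and> ?R2 = \<sigma>' then gam else 0) * u \<sigma>'" for \<sigma>'
    unfolding set1[symmetric] set2[symmetric] by (simp add: sis_rate_def algebra_simps)
  have suba: "?F1 ` nbr E x1 \<subseteq> ?T"
  proof
    fix z assume "z \<in> ?F1 ` nbr E x1"
    then obtain y where y: "y \<in> nbr E x1" "z = ?F1 y" by auto
    obtain c d where "?F1 y = (y, x2, c, d)" using nrm_pos[of y x2 ba bb] by blast
    then show "z \<in> ?T" using y nbr_sub nbr_not_self x by (auto simp: sis_states_def)
  qed
  have subb: "?F2 ` nbr E x2 \<subseteq> ?T"
  proof
    fix z assume "z \<in> ?F2 ` nbr E x2"
    then obtain y where y: "y \<in> nbr E x2" "z = ?F2 y" by auto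
    obtain c d where "?F2 y = (x1, y, c, d)" using nrm_pos[of x1 y ba bb] by blast
    then show "z \<in> ?T" using y nbr_sub nbr_not_self x by (auto simp: sis_states_def)
  qed
  have R1: "?R1 \<in> ?T \<longleftrightarrow> ?R1 \<noteq> (x1, x2, ba, bb)"
  proof -
    obtain c d where "?R1 = (x1, x2, c, d)" using nrm_pos[of x1 x2 False bb] by blast
    then show ?thesis using x by (auto simp: sis_states_def)
  qed
  have R2: "?R2 \<in> ?T \<longleftrightarrow> ?R2 \<noteq> (x1, x2, ba, bb)"
  proof -
    obtain c d where "?R2 = (x1, x2, c, d)" using nrm_pos[of x1 x2 ba False] by blast
    then show ?thesis using x by (auto simp: sis_states_def)
  qed
  show ?thesis
    unfolding r sum.distrib
    unfolding sum_move_term[OF fT nbr_fin suba] sum_move_term[OF fT nbr_fin subb]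
      sum_rec_term[OF fT] R1 R2
    by (simp add: sum_distrib_left)
qed

lemma sis_total:
  assumes x: "x1 \<in> V" "x2 \<in> V"
  shows "total_rate (sis_rate V E lam gam) (sis_states V) (x1, x2, ba, bb) =
     2 * lam + (if ba \<and> sis_normalize (x1, x2, False, bb) \<noteq> (x1, x2, ba, bb) then gam else 0)
    + (if bb \<and> sis_normalize (x1, x2, ba, False) \<noteq> (x1, x2, ba, bb) then gam else 0)"
  using sis_gen[OF x, where u="\<lambda>_. 1" and gam=gam and ba=ba and bb=bb] deg_pos[OF x(1)] deg_pos[OF x(2)]
  by (simp add: total_rate_def deg_card)

lemma sis_ctmc:
  assumes gam: "0 \<le> gam"
  shows "ctmc (sis_rate V E lam gam) (sis_states V)"
proof
  show "finite (sis_states V)" by (rule finite_states)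
  show "0 < total_rate (sis_rate V E lam gam) (sis_states V) x" if "x \<in> sis_states V" for x
  proof -
    obtain x1 x2 b1 b2 where "x = (x1, x2, b1, b2)" by (cases x) auto
    then show ?thesis using that sis_total[of x1 x2 gam b1 b2] lam gam by (auto simp: sis_states_def)
  qed
  show "0 \<le> sis_rate V E lam gam x y" if "x \<in> sis_states V" "y \<in> sis_states V" for x y
  proof -
    obtain x1 x2 b1 b2 where "x = (x1, x2, b1, b2)" by (cases x) auto
    then show ?thesis using lam gam
      by (auto simp: sis_rate_def intro!: add_nonneg_nonneg sum_nonneg divide_nonneg_nonneg)
  qed
qed

end


context graph_setup
begin

lemma main:
  assumes et: "edge_transitive V E" and gam: "0 < gam" and s: "0 < s" and v0: "v0 \<in> V"
  shows "sis_end_laplace V E lam gam v0 s =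
    2 * gam * ((1 - meet_laplace V E lam a b (s + gam)) / (s + gam)
               - (1 - meet_laplace V E lam a b (s + 2 * gam)) / (s + 2 * gam))
    / ((2 * lam + s) / (2 * lam) - 2 * meet_laplace V E lam a b (s + gam)
       + meet_laplace V E lam a b (s + 2 * gam))"
proof -
  interpret SI: ctmc "sis_rate V E lam gam" "sis_states V" using gam by (intro sis_ctmc) simp
  have aV: "a \<in> V" "b \<in> V" using edge_in[OF ab] by auto
  define m1 where "m1 x y = meet_laplace V E lam x y (s + gam)" for x y
  define m2 where "m2 x y = meet_laplace V E lam x y (s + 2 * gam)" for x y
  define M1 where "M1 = m1 a b"
  define M2 where "M2 = m2 a b"
  define A0 where "A0 = 2 * gam * ((1 - M1) / (s + gam) - (1 - M2) / (s + 2 * gam))"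
  define D where "D = (2 * lam + s) / (2 * lam) - 2 * M1 + M2"
  define c where "c = A0 / D"
  define fTT where "fTT x y = 2 * gam * ((1 - m1 x y) / (s + gam) - (1 - m2 x y) / (s + 2 * gam)) + (2 * m1 x y - m2 x y) * c" for x y
  define fT where "fT x y = gam * (1 - m1 x y) / (s + gam) + m1 x y * c" for x y
  define U where "U \<sigma> = (case \<sigma> of (x1, x2, b1, b2) \<Rightarrow>
     if \<not> b1 \<and> \<not> b2 then 1 else if b1 \<and> b2 then fTT x1 x2 else if x1 \<noteq> x2 then fT x1 x2
     else (lam / deg E x1 * (\<Sum>y\<in>nbr E x1. fT y x2) + lam / deg E x2 * (\<Sum>y\<in>nbr E x2. fT x1 y) + gam)
          / (2 * lam + gam + s))" for \<sigma>
  define K0 where "K0 = 2 * gam * (1 / (s + gam) - 1 / (s + 2 * gam))"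
  define K1 where "K1 = 2 * c - 2 * gam / (s + gam)"
  define K2 where "K2 = 2 * gam / (s + 2 * gam) - c"
  define L0 where "L0 = gam / (s + gam)"
  define L1 where "L1 = c - gam / (s + gam)"

  have l0: "(gam + s) * L0 = gam" unfolding L0_def using gam s by (simp add: add.commute)
  have k2: "gam * K1 - 2 * gam * L1 = 0" unfolding K1_def L1_def by (simp add: algebra_simps)
  have k1: "(2 * gam + s) * K0 - 2 * gam * L0 = 0"
  proof -
    have "1 / (s + gam) - 1 / (s + 2 * gam) = gam / ((s + gam) * (s + 2 * gam))"
      using gam s by (simp add: field_simps)
    then have K0: "K0 = (2 * gam * gam) / ((s + gam) * (s + 2 * gam))" unfolding K0_def by simp
    have canc: "R \<noteq> 0 \<Longrightarrow> R * (X / (P * R)) = X / P" for R X P :: real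
      by (cases "P = 0") (simp_all add: field_simps)
    have "(2 * gam + s) * K0 = (s + 2 * gam) * ((2 * gam * gam) / ((s + gam) * (s + 2 * gam)))"
      unfolding K0 by (simp add: add.commute)
    also have "\<dots> = (2 * gam * gam) / (s + gam)" using gam s by (intro canc) simp
    also have "\<dots> = 2 * gam * L0" unfolding L0_def by simp
    finally show ?thesis by simp
  qed
  have Dpos: "0 < D"
  proof -
    have "2 * M1 - M2 \<le> 1" unfolding M1_def M2_def m1_def m2_def
      using mm_two_bound[OF aV, of s gam] s gam by simp
    moreover have "(2 * lam + s) / (2 * lam) = 1 + s / (2 * lam)" using lam by (simp add: field_simps)
    moreover have "0 < s / (2 * lam)" using s lam by simp
    ultimately show ?thesis unfolding D_def by linarith
  qed
  have cD: "c * D = A0" unfolding c_def using Dpos by simp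

  have mdiag: "m1 x x = 1" "m2 x x = 1" if "x \<in> V" for x
    using that by (simp_all add: m1_def m2_def mm_diag)
  have fTT_diag: "fTT x x = c" if "x \<in> V" for x using mdiag[OF that] by (simp add: fTT_def)
  have fT_diag: "fT x x = c" if "x \<in> V" for x using mdiag[OF that] by (simp add: fT_def)
  have fTT_lin: "fTT x y = K0 + K1 * m1 x y + K2 * m2 x y" for x y
    by (simp add: fTT_def K0_def K1_def K2_def diff_divide_distrib algebra_simps)
  have fT_lin: "fT x y = L0 + L1 * m1 x y" for x y
    by (simp add: fT_def L0_def L1_def diff_divide_distrib algebra_simps)

  have lin: "lam / deg E x * (\<Sum>z\<in>nbr E x. \<alpha> + \<beta> * m1 z y + \<delta> * m2 z y)
      + lam / deg E y * (\<Sum>z\<in>nbr E y. \<alpha> + \<beta> * m1 x z + \<delta> * m2 x z)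
      = 2 * lam * \<alpha> + \<beta> * (2 * lam + (s + gam)) * m1 x y + \<delta> * (2 * lam + (s + 2 * gam)) * m2 x y"
    if xy: "x \<in> V" "y \<in> V" "x \<noteq> y" for x y \<alpha> \<beta> \<delta>
  proof -
    define P1 where "P1 = (\<Sum>z\<in>nbr E x. m1 z y)"
    define P2 where "P2 = (\<Sum>z\<in>nbr E y. m1 x z)"
    define Q1 where "Q1 = (\<Sum>z\<in>nbr E x. m2 z y)"
    define Q2 where "Q2 = (\<Sum>z\<in>nbr E y. m2 x z)"
    have e1: "(2 * lam + (s + gam)) * m1 x y = lam / deg E x * P1 + lam / deg E y * P2"
      unfolding m1_def P1_def P2_def using mm_step[OF xy, of "s + gam"] s gam by simp
    have e2: "(2 * lam + (s + 2 * gam)) * m2 x y = lam / deg E x * Q1 + lam / deg E y * Q2"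
      unfolding m2_def Q1_def Q2_def using mm_step[OF xy, of "s + 2 * gam"] s gam by simp
    have dx: "0 < real (deg E x)" "0 < real (deg E y)" using deg_pos xy by auto
    have s1: "(\<Sum>z\<in>nbr E x. \<alpha> + \<beta> * m1 z y + \<delta> * m2 z y) = real (deg E x) * \<alpha> + \<beta> * P1 + \<delta> * Q1"
      by (simp add: sum.distrib sum_distrib_left P1_def Q1_def deg_card)
    have s2: "(\<Sum>z\<in>nbr E y. \<alpha> + \<beta> * m1 x z + \<delta> * m2 x z) = real (deg E y) * \<alpha> + \<beta> * P2 + \<delta> * Q2"
      by (simp add: sum.distrib sum_distrib_left P2_def Q2_def deg_card)
    have "lam / deg E x * (real (deg E x) * \<alpha> + \<beta> * P1 + \<delta> * Q1) + lam / deg E y * (real (deg E y) * \<alpha> + \<beta> * P2 + \<delta> * Q2)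
        = 2 * lam * \<alpha> + \<beta> * (lam / deg E x * P1 + lam / deg E y * P2) + \<delta> * (lam / deg E x * Q1 + lam / deg E y * Q2)"
      using dx by (simp add: field_simps)
    then show ?thesis unfolding s1 s2 e1[symmetric] e2[symmetric] by (simp add: algebra_simps)
  qed

  have U_nrm: "U (sis_normalize (y, z, b1, b2)) = (if \<not> b1 \<and> \<not> b2 then 1 else if b1 \<and> b2 then fTT y z else fT y z)"
    if "y \<in> V" "z \<in> V" for y z b1 b2
    using that fTT_diag fT_diag by (cases "y = z") (auto simp: sis_normalize_def U_def)

  let ?A = "{\<sigma> \<in> sis_states V. \<not> fst (snd (snd \<sigma>)) \<and> \<not> snd (snd (snd \<sigma>))}"
  have hU: "U (v0, v0, True, True) = hit_laplace (sis_rate V E lam gam) (sis_states V) (v0, v0, True, True) ?A s"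
  proof (rule SI.hit_unique[OF s])
    fix \<sigma> assume "\<sigma> \<in> sis_states V" "\<sigma> \<in> ?A"
    then show "U \<sigma> = 1" by (auto simp: U_def split: prod.splits)
  next
    show "(v0, v0, True, True) \<in> sis_states V" using v0 by (simp add: sis_states_def)
  next
    fix \<sigma> assume \<sigma>S: "\<sigma> \<in> sis_states V" and \<sigma>A: "\<sigma> \<notin> ?A"
    obtain x1 x2 b1 b2 where \<sigma>: "\<sigma> = (x1, x2, b1, b2)" by (cases \<sigma>) auto
    have x: "x1 \<in> V" "x2 \<in> V" using \<sigma>S \<sigma> by (auto simp: sis_states_def)
    have bb: "b1 \<or> b2" using \<sigma>S \<sigma>A \<sigma> by auto
    have sumU1: "(\<Sum>y\<in>nbr E x1. U (sis_normalize (y, x2, b1, b2))) = (\<Sum>y\<in>nbr E x1. if b1 \<and> b2 then fTT y x2 else fT y x2)"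
    proof (intro sum.cong refl)
      fix y assume "y \<in> nbr E x1"
      then have "y \<in> V" using nbr_sub by auto
      then show "U (sis_normalize (y, x2, b1, b2)) = (if b1 \<and> b2 then fTT y x2 else fT y x2)"
        using U_nrm[OF _ x(2)] bb by auto
    qed
    have sumU2: "(\<Sum>y\<in>nbr E x2. U (sis_normalize (x1, y, b1, b2))) = (\<Sum>y\<in>nbr E x2. if b1 \<and> b2 then fTT x1 y else fT x1 y)"
    proof (intro sum.cong refl)
      fix y assume "y \<in> nbr E x2"
      then have "y \<in> V" using nbr_sub by auto
      then show "U (sis_normalize (x1, y, b1, b2)) = (if b1 \<and> b2 then fTT x1 y else fT x1 y)"
        using U_nrm[OF x(1)] bb by auto
    qed
    have goal_eq: "(total_rate (sis_rate V E lam gam) (sis_states V) \<sigma> + s) * U \<sigma> =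
      (\<Sum>y\<in>sis_states V - {\<sigma>}. sis_rate V E lam gam \<sigma> y * U y) \<longleftrightarrow>
      (total_rate (sis_rate V E lam gam) (sis_states V) (x1, x2, b1, b2) + s) * U (x1, x2, b1, b2) =
        lam / deg E x1 * (\<Sum>y\<in>nbr E x1. if b1 \<and> b2 then fTT y x2 else fT y x2)
      + lam / deg E x2 * (\<Sum>y\<in>nbr E x2. if b1 \<and> b2 then fTT x1 y else fT x1 y)
      + (if b1 \<and> sis_normalize (x1, x2, False, b2) \<noteq> (x1, x2, b1, b2) then gam * U (sis_normalize (x1, x2, False, b2)) else 0)
      + (if b2 \<and> sis_normalize (x1, x2, b1, False) \<noteq> (x1, x2, b1, b2) then gam * U (sis_normalize (x1, x2, b1, False)) else 0)"
      unfolding \<sigma> sis_gen[OF x] sumU1 sumU2 ..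
    show "(total_rate (sis_rate V E lam gam) (sis_states V) \<sigma> + s) * U \<sigma> =
      (\<Sum>y\<in>sis_states V - {\<sigma>}. sis_rate V E lam gam \<sigma> y * U y)"
    proof (cases "x1 = x2")
      case neq: False
      have LTT: "lam / deg E x1 * (\<Sum>y\<in>nbr E x1. fTT y x2) + lam / deg E x2 * (\<Sum>y\<in>nbr E x2. fTT x1 y)
          = 2 * lam * K0 + K1 * (2 * lam + (s + gam)) * m1 x1 x2 + K2 * (2 * lam + (s + 2 * gam)) * m2 x1 x2"
        using lin[OF x neq, of K0 K1 K2] by (simp add: fTT_lin)
      have LT: "lam / deg E x1 * (\<Sum>y\<in>nbr E x1. fT y x2) + lam / deg E x2 * (\<Sum>y\<in>nbr E x2. fT x1 y)
          = 2 * lam * L0 + L1 * (2 * lam + (s + gam)) * m1 x1 x2"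
        using lin[OF x neq, of L0 L1 0] by (simp add: fT_lin)
      have n: "sis_normalize (x1, x2, p, q) = (x1, x2, p, q)" for p q using neq by (simp add: sis_normalize_def)
      have u: "U (x1, x2, p, q) = (if \<not> p \<and> \<not> q then 1 else if p \<and> q then fTT x1 x2 else fT x1 x2)" for p q
        using neq by (simp add: U_def)
      consider (TT) "b1" "b2" | (TF) "b1" "\<not> b2" | (FT) "\<not> b1" "b2" using bb by auto
      then show ?thesis
      proof cases
        case TT
        have "(2 * lam + gam + gam + s) * fTT x1 x2 -
          ((2 * lam * K0 + K1 * (2 * lam + (s + gam)) * m1 x1 x2 + K2 * (2 * lam + (s + 2 * gam)) * m2 x1 x2)
          + gam * fT x1 x2 + gam * fT x1 x2) = ((2 * gam + s) * K0 - 2 * gam * L0) + (gam * K1 - 2 * gam * L1) * m1 x1 x2"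
          by (simp add: fTT_lin fT_lin algebra_simps)
        also have "\<dots> = 0" using k1 k2 by simp
        finally have "(2 * lam + gam + gam + s) * fTT x1 x2 =
          (2 * lam * K0 + K1 * (2 * lam + (s + gam)) * m1 x1 x2 + K2 * (2 * lam + (s + 2 * gam)) * m2 x1 x2)
          + gam * fT x1 x2 + gam * fT x1 x2" by simp
        then show ?thesis unfolding goal_eq sis_total[OF x] using TT by (simp add: n u LTT[symmetric])
      next
        case TF
        have "(2 * lam + gam + s) * fT x1 x2 - ((2 * lam * L0 + L1 * (2 * lam + (s + gam)) * m1 x1 x2) + gam * 1)
           = (gam + s) * L0 - gam"
          by (simp add: fT_lin algebra_simps)
        also have "\<dots> = 0" using l0 by simp
        finally have "(2 * lam + gam + s) * fT x1 x2 = (2 * lam * L0 + L1 * (2 * lam + (s + gam)) * m1 x1 x2) + gam * 1"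
          by simp
        then show ?thesis unfolding goal_eq sis_total[OF x] using TF by (simp add: n u LT[symmetric])
      next
        case FT
        have "(2 * lam + gam + s) * fT x1 x2 - ((2 * lam * L0 + L1 * (2 * lam + (s + gam)) * m1 x1 x2) + gam * 1)
           = (gam + s) * L0 - gam"
          by (simp add: fT_lin algebra_simps)
        also have "\<dots> = 0" using l0 by simp
        finally have "(2 * lam + gam + s) * fT x1 x2 = (2 * lam * L0 + L1 * (2 * lam + (s + gam)) * m1 x1 x2) + gam * 1"
          by simp
        then show ?thesis unfolding goal_eq sis_total[OF x] using FT by (simp add: n u LT[symmetric])
      qed
    next
      case eq: True
      then have x2: "x2 = x1" by simp
      have dpos: "0 < real (deg E x1)" using deg_pos x by simp
      have n: "sis_normalize (x1, x1, p, q) = (if p \<or> q then (x1, x1, True, True) else (x1, x1, p, q))" for p q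
        by (simp add: sis_normalize_def)
      consider (TT) "b1" "b2" | (TF) "b1" "\<not> b2" | (FT) "\<not> b1" "b2" using bb by auto
      then show ?thesis
      proof cases
        case TT
        define Z where "Z = A0 + (2 * M1 - M2) * c"
        have Zy: "fTT y x1 = Z" "fTT x1 y = Z" if y: "y \<in> nbr E x1" for y
        proof -
          have e1: "{x1, y} \<in> E" using y by (simp add: nbr_def)
          have e2: "{y, x1} \<in> E" using e1 by (simp add: insert_commute)
          have "m1 y x1 = M1" "m2 y x1 = M2" "m1 x1 y = M1" "m2 x1 y = M2"
            unfolding m1_def m2_def M1_def M2_def using mm_edge[OF et _ e1] mm_edge[OF et _ e2] gam s by auto
          then show "fTT y x1 = Z" "fTT x1 y = Z" by (simp_all add: fTT_def Z_def A0_def)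
        qed
        have s1: "(\<Sum>y\<in>nbr E x1. fTT y x1) = real (deg E x1) * Z"
          using Zy(1) by (simp add: deg_card)
        have s2: "(\<Sum>y\<in>nbr E x1. fTT x1 y) = real (deg E x1) * Z"
          using Zy(2) by (simp add: deg_card)
        have key: "(2 * lam + s) * c = 2 * lam * Z"
        proof -
          have "2 * lam * Z = 2 * lam * (c * D) + 2 * lam * (2 * M1 - M2) * c"
            unfolding Z_def cD by (simp add: algebra_simps)
          also have "\<dots> = c * (2 * lam * D + 2 * lam * (2 * M1 - M2))" by (simp add: algebra_simps)
          also have "2 * lam * D + 2 * lam * (2 * M1 - M2) = 2 * lam + s"
            unfolding D_def using lam by (simp add: field_simps)
          finally show ?thesis by simp
        qed
        have uc: "U (x1, x1, True, True) = c" using fTT_diag x by (simp add: U_def)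
        show ?thesis unfolding goal_eq sis_total[OF x] x2
          using TT dpos key by (simp add: n uc s1 s2 sis_total[OF x(1) x(1)] algebra_simps)
      next
        case TF
        show ?thesis unfolding goal_eq sis_total[OF x] x2
          using TF dpos lam gam s by (simp add: n U_def sis_total[OF x(1) x(1)] add.commute add.left_commute)
      next
        case FT
        show ?thesis unfolding goal_eq sis_total[OF x] x2
          using FT dpos lam gam s by (simp add: n U_def sis_total[OF x(1) x(1)] add.commute add.left_commute)
      qed
    qed
  qed
  have "sis_end_laplace V E lam gam v0 s = U (v0, v0, True, True)"
    using hU by (simp add: sis_end_laplace_def)
  also have "\<dots> = c" using fTT_diag v0 by (simp add: U_def)
  also have "c = A0 / D" by (simp add: c_def)
  finally show ?thesis by (simp add: A0_def D_def M1_def M2_def m1_def m2_def)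
qed

end


theorem theorem1:
  fixes V :: "'v set" and E :: "'v set set" and lam gam s :: real and v0 a b :: 'v
  assumes "simple_graph V E" and "graph_connected V E" and "edge_transitive V E"
    and "lam > 0" and "gam > 0" and "s > 0"
    and "v0 \<in> V" and "{a, b} \<in> E"
  shows "sis_end_laplace V E lam gam v0 s =
    2 * gam * ((1 - meet_laplace V E lam a b (s + gam)) / (s + gam)
               - (1 - meet_laplace V E lam a b (s + 2 * gam)) / (s + 2 * gam))
    / ((2 * lam + s) / (2 * lam) - 2 * meet_laplace V E lam a b (s + gam)
       + meet_laplace V E lam a b (s + 2 * gam))"
proof -
  interpret graph_setup V E lam a b
    using assms by unfold_locales auto
  show ?thesis using assms by (intro main) auto
qed

end
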